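(* Let $G=(S,T,\pi)$ be a countable two-person win-lose game such that every set in $\mathcal{B}^2(G)$ is finite, and assume $G$ is LNG-free. Then the infima below are attained and $$\sup_{\mathbf{p}\in\Delta(S)}\min_{\mathbf{q}\in\Delta(T)}\pi^{\mathrm{mix}}(\mathbf{p},\mathbf{q})=1=\min_{\mathbf{q}\in\Delta(T)}\sup_{\mathbf{p}\in\Delta(S)}\pi^{\mathrm{mix}}(\mathbf{p},\mathbf{q}).$$
   Context: A two-person win-lose game is $G=(S,T,\pi)$ with non-empty $S,T$ and $\pi:S\times T\to\{0,1\}$; countable means $|S|=|T|=\aleph_0$. $\Delta(X)$ is the set of probability distributions on $X$ with at most countable support; $\pi^{\mathrm{mix}}(\mathbf{p},\mathbf{q})=\sum p_sq_t\pi(s,t)$. For $t\in T$, $B_t=\{s\in S:\pi(s,t)=0\}$ and $\mathcal{B}^2(G)=\{B_t:t\in T\}$. $G$ is LNG-free if there are no sequences of distinct $s_1,s_2,\ldots\in S$ and distinct $t_1,t_2,\ldots\in T$ with $\pi(s_i,t_j)=1\iff i\ge j$. *)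

theory Defs
  imports "HOL-Analysis.Analysis"
begin

text \<open>A two-person win-lose game (S, T, pi): strategy sets S, T and payoff
  pi : S x T -> {0,1}, represented as a boolean predicate (True = 1).\<close>

definition countable_game :: "'a set \<Rightarrow> 'b set \<Rightarrow> bool" where
  "countable_game S T \<longleftrightarrow> countable S \<and> infinite S \<and> countable T \<and> infinite T"

definition distr :: "'a set \<Rightarrow> ('a \<Rightarrow> real) set" where
  "distr X = {p. (\<forall>x. 0 \<le> p x) \<and> (\<forall>x. x \<notin> X \<longrightarrow> p x = 0)
                 \<and> countable {x. p x \<noteq> 0} \<and> (p has_sum 1) X}"

definition pimix :: "'a set \<Rightarrow> 'b set \<Rightarrow> ('a \<Rightarrow> 'b \<Rightarrow> bool)
                     \<Rightarrow> ('a \<Rightarrow> real) \<Rightarrow> ('b \<Rightarrow> real) \<Rightarrow> real" where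
  "pimix S T \<pi> p q = (\<Sum>\<^sub>\<infinity>(s,t)\<in>S \<times> T. p s * q t * of_bool (\<pi> s t))"

definition Bset :: "'a set \<Rightarrow> ('a \<Rightarrow> 'b \<Rightarrow> bool) \<Rightarrow> 'b \<Rightarrow> 'a set" where
  "Bset S \<pi> t = {s\<in>S. \<not> \<pi> s t}"

definition B2 :: "'a set \<Rightarrow> 'b set \<Rightarrow> ('a \<Rightarrow> 'b \<Rightarrow> bool) \<Rightarrow> 'a set set" where
  "B2 S T \<pi> = Bset S \<pi> ` T"

text \<open>LNG-free: no sequences of distinct s_i in S, distinct t_j in T with
  pi(s_i,t_j) = 1 iff i >= j (indices from 0 instead of 1, which is immaterial).\<close>
definition LNG_free :: "'a set \<Rightarrow> 'b set \<Rightarrow> ('a \<Rightarrow> 'b \<Rightarrow> bool) \<Rightarrow> bool" where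
  "LNG_free S T \<pi> \<longleftrightarrow> \<not> (\<exists>s :: nat \<Rightarrow> 'a. \<exists>t :: nat \<Rightarrow> 'b.
      inj s \<and> inj t \<and> range s \<subseteq> S \<and> range t \<subseteq> T \<and>
      (\<forall>i j. \<pi> (s i) (t j) \<longleftrightarrow> i \<ge> j))"

end

theory Submission
  imports Defs
begin

lemma distr_D:
  assumes "p \<in> distr X"
  shows "\<And>x. 0 \<le> p x" "\<And>x. x \<notin> X \<Longrightarrow> p x = 0" "(p has_sum 1) X"
  using assms unfolding distr_def by auto

lemma distr_sum_le1:
  assumes "p \<in> distr X" "finite F" "F \<subseteq> X"
  shows "sum p F \<le> 1"
  using finite_sum_le_has_sum[OF distr_D(3)[OF assms(1)] assms(2,3)] distr_D(1)[OF assms(1)] by auto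

lemma delta_distr:
  assumes "x \<in> X"
  shows "(\<lambda>y. if y = x then 1 else 0) \<in> distr X"
proof -
  have "{y. (if y = x then 1 else 0::real) \<noteq> 0} = {x}" by auto
  moreover have "((\<lambda>y. if y = x then 1 else 0::real) has_sum 1) X"
    by (rule has_sum_finite_neutralI[of "{x}"]) (use assms in auto)
  ultimately show ?thesis using assms unfolding distr_def by auto
qed

lemma pimix_formula:
  assumes p: "p \<in> distr S" and q: "q \<in> distr T"
    and fin: "\<And>t. t \<in> T \<Longrightarrow> finite (Bset S \<pi> t)"
  shows "((\<lambda>t. q t * (1 - sum p (Bset S \<pi> t))) has_sum pimix S T \<pi> p q) T"
proof -
  define f where "f = (\<lambda>(s,t). p s * q t * of_bool (\<pi> s t))"
  have p0: "\<And>x. 0 \<le> p x" and q0: "\<And>x. 0 \<le> q x" using p q by (auto simp: distr_def)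
  have summ: "f summable_on (S \<times> T)"
  proof (rule nonneg_bdd_above_summable_on)
    show "\<And>x. x \<in> S \<times> T \<Longrightarrow> 0 \<le> f x" using p0 q0 by (auto simp: f_def)
    show "bdd_above (sum f ` {F. F \<subseteq> S \<times> T \<and> finite F})"
    proof (rule bdd_aboveI[of _ 1])
      fix y assume "y \<in> sum f ` {F. F \<subseteq> S \<times> T \<and> finite F}"
      then obtain F where F: "F \<subseteq> S \<times> T" "finite F" and y: "y = sum f F" by auto
      have "sum f F \<le> sum f (fst ` F \<times> snd ` F)"
        by (rule sum_mono2) (use F p0 q0 in \<open>auto simp: f_def intro!: mult_nonneg_nonneg rev_image_eqI\<close>)
      also have "\<dots> \<le> (\<Sum>(s,t)\<in>fst ` F \<times> snd ` F. p s * q t)"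
        by (rule sum_mono) (use p0 q0 in \<open>auto simp: f_def mult_nonneg_nonneg\<close>)
      also have "\<dots> = sum p (fst ` F) * sum q (snd ` F)"
        by (simp add: sum_product sum.cartesian_product)
      also have "\<dots> \<le> 1 * 1"
      proof -
        have "fst ` F \<subseteq> S" "snd ` F \<subseteq> T" using F by auto
        then have "sum p (fst ` F) \<le> 1" "sum q (snd ` F) \<le> 1"
          using distr_sum_le1[OF p, of "fst ` F"] distr_sum_le1[OF q, of "snd ` F"] F by auto
        then show ?thesis by (intro mult_mono) (auto intro!: sum_nonneg simp: p0 q0)
      qed
      finally show "y \<le> 1" using y by simp
    qed
  qed
  have hs: "(f has_sum pimix S T \<pi> p q) (S \<times> T)"
    using has_sum_infsum[OF summ] unfolding pimix_def f_def by simp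
  then have hs2: "((\<lambda>(x,y). f (y,x)) has_sum pimix S T \<pi> p q) (T \<times> S)"
    using has_sum_swap by blast
  show ?thesis
  proof (rule has_sum_SigmaD[OF hs2])
    fix t assume t: "t \<in> T"
    have BS: "Bset S \<pi> t \<subseteq> S" by (auto simp: Bset_def)
    have h1: "(p has_sum 1) S" using p by (auto simp: distr_def)
    have h2: "(p has_sum sum p (Bset S \<pi> t)) (Bset S \<pi> t)"
      by (rule has_sum_finiteI[OF fin[OF t]]) simp
    have h3: "(p has_sum (1 - sum p (Bset S \<pi> t))) (S - Bset S \<pi> t)"
      by (rule has_sum_Diff[OF h1 h2 BS])
    have h4: "((\<lambda>s. p s * of_bool (\<pi> s t)) has_sum (1 - sum p (Bset S \<pi> t))) S"
      using h3 by (subst has_sum_cong_neutral[where g = p and T = "S - Bset S \<pi> t"]) (auto simp: Bset_def)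
    have h5: "((\<lambda>s. q t * (p s * of_bool (\<pi> s t))) has_sum q t * (1 - sum p (Bset S \<pi> t))) S"
      by (rule has_sum_cmult_right[OF h4])
    show "((\<lambda>y. (\<lambda>(x,y). f (y,x)) (t, y)) has_sum q t * (1 - sum p (Bset S \<pi> t))) S"
      using h5 by (simp add: f_def mult_ac)
  qed
qed

primrec lng_st :: "(nat \<Rightarrow> 'a set) \<Rightarrow> (nat \<Rightarrow> 'a set) \<Rightarrow> nat \<Rightarrow> nat \<times> 'a set" where
  "lng_st A C 0 = (0, C 0)"
| "lng_st A C (Suc j) = (let k' = (SOME k'. fst (lng_st A C j) \<le> k' \<and> \<not> A k' \<subseteq> snd (lng_st A C j)) in (k', snd (lng_st A C j) \<union> C k'))"

lemma no_branch:
  assumes lng: "LNG_free S T \<pi>"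
    and fin: "\<And>t. t \<in> T \<Longrightarrow> finite (Bset S \<pi> t)"
    and mono: "\<And>k. A k \<subset> A (Suc k)"
    and cov: "\<And>k. \<exists>t\<in>T. A k \<subseteq> Bset S \<pi> t"
  shows False
proof -
  have "\<forall>k. \<exists>t. t \<in> T \<and> A k \<subseteq> Bset S \<pi> t" using cov by blast
  then obtain \<tau> where \<tau>': "\<forall>k. \<tau> k \<in> T \<and> A k \<subseteq> Bset S \<pi> (\<tau> k)" by (rule choice[THEN exE])
  then have \<tau>: "\<And>k. \<tau> k \<in> T" "\<And>k. A k \<subseteq> Bset S \<pi> (\<tau> k)" by auto
  define C where "C k = Bset S \<pi> (\<tau> k)" for k
  have Cfin: "finite (C k)" for k using fin \<tau> C_def by auto
  have Amono: "A i \<subseteq> A j" if "i \<le> j" for i j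
  proof -
    have "\<And>n. A n \<le> A (Suc n)" using mono by (simp add: less_imp_le)
    then show ?thesis using lift_Suc_mono_le[of A, OF _ that] by blast
  qed
  have Acard: "k \<le> card (A k)" for k
  proof (induction k)
    case 0 then show ?case by simp
  next
    case (Suc k)
    have "finite (A (Suc k))" using \<tau>(2)[of "Suc k"] Cfin[of "Suc k"] unfolding C_def by (rule finite_subset)
    then have "card (A k) < card (A (Suc k))" by (rule psubset_card_mono[OF _ mono[of k]])
    then show ?case using Suc by simp
  qed
  have escape: "\<exists>k'. k \<le> k' \<and> \<not> A k' \<subseteq> W" if "finite W" for k W
  proof -
    have "\<not> A (max k (Suc (card W))) \<subseteq> W"
    proof
      assume "A (max k (Suc (card W))) \<subseteq> W"
      then have "card (A (max k (Suc (card W)))) \<le> card W" by (rule card_mono[OF that])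
      with Acard[of "max k (Suc (card W))"] show False by simp
    qed
    then show ?thesis by (intro exI[of _ "max k (Suc (card W))"]) simp
  qed
  define st where "st = lng_st A C"
  define \<kappa> where "\<kappa> j = fst (st j)" for j
  define W where "W j = snd (st j)" for j
  have Wfin: "finite (W j)" for j
    by (induction j) (auto simp: W_def st_def Let_def Cfin)
  have step: "\<kappa> j \<le> \<kappa> (Suc j) \<and> \<not> A (\<kappa> (Suc j)) \<subseteq> W j" for j
  proof -
    have "\<exists>k'. \<kappa> j \<le> k' \<and> \<not> A k' \<subseteq> W j" using escape Wfin by blast
    then have "\<kappa> j \<le> (SOME k'. \<kappa> j \<le> k' \<and> \<not> A k' \<subseteq> W j) \<and> \<not> A (SOME k'. \<kappa> j \<le> k' \<and> \<not> A k' \<subseteq> W j) \<subseteq> W j"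
      by (rule someI_ex)
    then show ?thesis by (simp add: \<kappa>_def W_def st_def Let_def)
  qed
  have WSuc: "W (Suc j) = W j \<union> C (\<kappa> (Suc j))" for j
    by (simp add: W_def \<kappa>_def st_def Let_def)
  have W0: "W 0 = C (\<kappa> 0)" "\<kappa> 0 = 0" by (simp_all add: W_def \<kappa>_def st_def)
  have Wmono: "W i \<subseteq> W j" if "i \<le> j" for i j
  proof -
    have "\<And>n. W n \<le> W (Suc n)" using WSuc by blast
    then show ?thesis using lift_Suc_mono_le[of W, OF _ that] by blast
  qed
  have CW: "C (\<kappa> j) \<subseteq> W j" for j
    by (cases j) (auto simp: W0 WSuc)
  have kmono: "\<kappa> i \<le> \<kappa> j" if "i \<le> j" for i j
  proof -
    have "\<And>n. \<kappa> n \<le> \<kappa> (Suc n)" using step by blast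
    then show ?thesis using lift_Suc_mono_le[of \<kappa>, OF _ that] by blast
  qed
  define s where "s j = (SOME x. x \<in> A (\<kappa> (Suc j)) \<and> x \<notin> W j)" for j
  have s: "s j \<in> A (\<kappa> (Suc j)) \<and> s j \<notin> W j" for j
  proof -
    have "\<exists>x. x \<in> A (\<kappa> (Suc j)) \<and> x \<notin> W j" using step[of j] by blast
    then show ?thesis unfolding s_def by (rule someI_ex)
  qed
  define t where "t j = \<tau> (\<kappa> j)" for j
  have sS: "s j \<in> S" for j using s[of j] \<tau>(2) by (auto simp: Bset_def)
  have key: "\<pi> (s i) (t j) \<longleftrightarrow> j \<le> i" for i j
  proof (cases "j \<le> i")
    case True
    then have "C (\<kappa> j) \<subseteq> W i" using CW Wmono by blast
    then have "s i \<notin> Bset S \<pi> (t j)" using s[of i] by (auto simp: C_def t_def)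
    then show ?thesis using True sS by (auto simp: Bset_def)
  next
    case False
    then have "A (\<kappa> (Suc i)) \<subseteq> A (\<kappa> j)" using Amono kmono by simp
    then have "s i \<in> Bset S \<pi> (t j)" using s[of i] \<tau>(2)[of "\<kappa> j"] by (auto simp: t_def)
    then show ?thesis using False by (auto simp: Bset_def)
  qed
  have "inj s"
  proof (rule injI)
    fix i j assume e: "s i = s j"
    have "\<pi> (s j) (t i)" using key[of i i] e by simp
    then have "i \<le> j" using key[of j i] by simp
    moreover have "\<pi> (s i) (t j)" using key[of j j] e by simp
    then have "j \<le> i" using key[of i j] by simp
    ultimately show "i = j" by simp
  qed
  moreover have "inj t"
  proof (rule injI)
    fix i j assume e: "t i = t j"
    have "\<pi> (s i) (t j)" using key[of i i] e by simp
    then have "j \<le> i" using key[of i j] by simp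
    moreover have "\<pi> (s j) (t i)" using key[of j j] e by simp
    then have "i \<le> j" using key[of j i] by simp
    ultimately show "i = j" by simp
  qed
  moreover have "range t \<subseteq> T" using \<tau> by (auto simp: t_def)
  moreover have "range s \<subseteq> S" using sS by auto
  moreover have "\<forall>i j. \<pi> (s i) (t j) \<longleftrightarrow> i \<ge> j" using key by simp
  ultimately have ex: "\<exists>(s::nat \<Rightarrow> 'a) (t::nat \<Rightarrow> 'b). inj s \<and> inj t \<and> range s \<subseteq> S \<and> range t \<subseteq> T \<and> (\<forall>i j. \<pi> (s i) (t j) \<longleftrightarrow> i \<ge> j)"
    by - (intro exI[where x=s] exI[where x=t] conjI; assumption)
  from lng have "\<not> (\<exists>(s::nat \<Rightarrow> 'a) (t::nat \<Rightarrow> 'b). inj s \<and> inj t \<and> range s \<subseteq> S \<and> range t \<subseteq> T \<and> (\<forall>i j. \<pi> (s i) (t j) \<longleftrightarrow> i \<ge> j))"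
    unfolding LNG_free_def .
  with ex show False by contradiction
qed

lemma wfQ:
  assumes lng: "LNG_free S T \<pi>" and fin: "\<And>t. t \<in> T \<Longrightarrow> finite (Bset S \<pi> t)"
  shows "wf {(Y, X). X \<subset> Y \<and> (\<exists>t\<in>T. Y \<subseteq> Bset S \<pi> t)}"
proof (rule ccontr)
  assume "\<not> ?thesis"
  then obtain f where f: "\<And>i. (f (Suc i), f i) \<in> {(Y, X). X \<subset> Y \<and> (\<exists>t\<in>T. Y \<subseteq> Bset S \<pi> t)}"
    unfolding wf_iff_no_infinite_down_chain by blast
  show False
    by (rule no_branch[OF lng fin, of "\<lambda>k. f (Suc k)"]) (use f in auto)
qed

lemma max_attained:
  assumes lng: "LNG_free S T \<pi>" and fin: "\<And>t. t \<in> T \<Longrightarrow> finite (Bset S \<pi> t)"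
    and p: "p \<in> distr S" and Tne: "T \<noteq> {}"
  shows "\<exists>t0\<in>T. \<forall>t\<in>T. sum p (Bset S \<pi> t) \<le> sum p (Bset S \<pi> t0)"
proof (rule ccontr)
  assume nex: "\<not> ?thesis"
  define v where "v t = sum p (Bset S \<pi> t)" for t
  have p0: "\<And>x. 0 \<le> p x" using p by (auto simp: distr_def)
  have BS: "Bset S \<pi> t \<subseteq> S" for t by (auto simp: Bset_def)
  have v1: "v t \<le> 1" if "t\<in>T" for t
    unfolding v_def by (rule distr_sum_le1[OF p fin[OF that] BS])
  have bdd: "bdd_above (v ` T)" using v1 by (intro bdd_aboveI[of _ 1]) auto
  define \<sigma> where "\<sigma> = (SUP t\<in>T. v t)"
  have le: "v t \<le> \<sigma>" if "t \<in> T" for t unfolding \<sigma>_def by (rule cSUP_upper[OF that bdd])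
  have lt: "v t < \<sigma>" if tT: "t\<in>T" for t
  proof -
    obtain t' where "t' \<in> T" "v t < v t'" using nex tT by (auto simp: v_def not_le)
    then show ?thesis using le[of t'] by simp
  qed
  have approx: "\<exists>t\<in>T. v t > \<sigma> - \<eta>" if "\<eta> > 0" for \<eta>
  proof -
    have "\<sigma> - \<eta> < (SUP t\<in>T. v t)" using that \<sigma>_def by simp
    then show ?thesis using less_cSUP_iff[OF Tne bdd] by blast
  qed
  have main: "\<not> (\<forall>\<eta>>0. \<exists>t\<in>T. A \<subseteq> Bset S \<pi> t \<and> v t > \<sigma> - \<eta>)" for A :: "'a set"
  proof (rule wf_induct[OF wfQ[OF lng fin], where P = "\<lambda>A. \<not> (\<forall>\<eta>>0. \<exists>t\<in>T. A \<subseteq> Bset S \<pi> t \<and> v t > \<sigma> - \<eta>)"])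
    fix A :: "'a set"
    assume IH: "\<forall>y. (y, A) \<in> {(Y, X). X \<subset> Y \<and> (\<exists>t\<in>T. Y \<subseteq> Bset S \<pi> t)} \<longrightarrow> \<not> (\<forall>\<eta>>0. \<exists>t\<in>T. y \<subseteq> Bset S \<pi> t \<and> v t > \<sigma> - \<eta>)"
    show "\<not> (\<forall>\<eta>>0. \<exists>t\<in>T. A \<subseteq> Bset S \<pi> t \<and> v t > \<sigma> - \<eta>)"
    proof
      assume H: "\<forall>\<eta>>0. \<exists>t\<in>T. A \<subseteq> Bset S \<pi> t \<and> v t > \<sigma> - \<eta>"
      obtain t1 where t1: "t1 \<in> T" "A \<subseteq> Bset S \<pi> t1" using H by (meson zero_less_one)
      have Afin: "finite A" using fin[OF t1(1)] t1(2) finite_subset by blast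
      have "sum p A \<le> v t1" unfolding v_def by (rule sum_mono2[OF fin[OF t1(1)] t1(2)]) (simp add: p0)
      define g where "g = \<sigma> - sum p A"
      have gpos: "g > 0" using lt[OF t1(1)] \<open>sum p A \<le> v t1\<close> g_def by simp
      obtain W where W: "finite W" "W \<subseteq> S" "dist (sum p W) 1 \<le> g/4"
        using has_sum_finite_approximation[OF distr_D(3)[OF p], of "g/4"] gpos by auto
      have "\<bar>sum p W - 1\<bar> \<le> g/4" using W(3) by (simp add: dist_real_def)
      then have W1: "sum p W > 1 - g/2" using gpos unfolding abs_le_iff by linarith
      have meet: "(Bset S \<pi> t - A) \<inter> W \<noteq> {}" if t: "t \<in> T" "A \<subseteq> Bset S \<pi> t" "v t > \<sigma> - g/2" for t
      proof
        assume empty: "(Bset S \<pi> t - A) \<inter> W = {}"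
        let ?D = "Bset S \<pi> t - A"
        have Dfin: "finite ?D" using fin[OF t(1)] by simp
        have "v t = sum p ?D + sum p A"
          unfolding v_def by (rule sum.subset_diff[OF t(2) fin[OF t(1)]])
        moreover have "sum p ?D + sum p W = sum p (?D \<union> W)"
          by (rule sum.union_disjoint[symmetric]) (use Dfin W empty in auto)
        moreover have "sum p (?D \<union> W) \<le> 1"
          by (rule distr_sum_le1[OF p]) (use Dfin W BS in auto)
        ultimately have "v t < sum p A + g/2" using W1 by simp
        then show False using t(3) g_def by (simp add: field_simps)
      qed
      have IH': "\<exists>\<eta>>0. \<forall>t\<in>T. insert a A \<subseteq> Bset S \<pi> t \<longrightarrow> v t \<le> \<sigma> - \<eta>" if a: "a \<in> W - A" for a
      proof (cases "\<exists>t\<in>T. insert a A \<subseteq> Bset S \<pi> t")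
        case True
        then have "(insert a A, A) \<in> {(Y, X). X \<subset> Y \<and> (\<exists>t\<in>T. Y \<subseteq> Bset S \<pi> t)}" using a by auto
        then have "\<not> (\<forall>\<eta>>0. \<exists>t\<in>T. insert a A \<subseteq> Bset S \<pi> t \<and> v t > \<sigma> - \<eta>)" using IH by blast
        then show ?thesis by (auto simp: not_less)
      next
        case False then show ?thesis by (auto intro: exI[of _ 1])
      qed
      then obtain \<eta>f where \<eta>f: "\<And>a. a \<in> W - A \<Longrightarrow> \<eta>f a > 0 \<and> (\<forall>t\<in>T. insert a A \<subseteq> Bset S \<pi> t \<longrightarrow> v t \<le> \<sigma> - \<eta>f a)"
        by metis
      define \<eta> where "\<eta> = Min (insert (g/2) (\<eta>f ` (W - A)))"
      have finM: "finite (insert (g/2) (\<eta>f ` (W - A)))" using W(1) by simp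
      have \<eta>pos: "\<eta> > 0" unfolding \<eta>_def using finM gpos \<eta>f by (auto simp: Min_gr_iff)
      have \<eta>le1: "\<eta> \<le> g/2" unfolding \<eta>_def using finM by (intro Min_le) auto
      have \<eta>le2: "\<eta> \<le> \<eta>f a" if "a \<in> W - A" for a unfolding \<eta>_def using finM that by (intro Min_le) auto
      obtain t where t: "t\<in>T" "A \<subseteq> Bset S \<pi> t" "v t > \<sigma> - \<eta>" using H \<eta>pos by blast
      then have "v t > \<sigma> - g/2" using \<eta>le1 by linarith
      then obtain a where a: "a \<in> Bset S \<pi> t - A" "a \<in> W" using meet t by blast
      then have "insert a A \<subseteq> Bset S \<pi> t" using t by auto
      then have "v t \<le> \<sigma> - \<eta>f a" using \<eta>f[of a] a t by auto
      with \<eta>le2[of a] a t(3) show False by force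
    qed
  qed
  show False using main[of "{}"] approx by auto
qed

lemma wfR:
  assumes lng: "LNG_free S T \<pi>" and fin: "\<And>t. t \<in> T \<Longrightarrow> finite (Bset S \<pi> t)"
  shows "wf {(insert D \<A>, \<A>) | D \<A>. D \<noteq> {} \<and> finite D \<and> D \<inter> \<Union>\<A> = {} \<and> (\<exists>t\<in>T. \<forall>F\<in>insert D \<A>. Bset S \<pi> t \<inter> F \<noteq> {})}"
    (is "wf ?R")
proof (rule ccontr)
  assume "\<not> wf ?R"
  then have "\<exists>f. \<forall>i. (f (Suc i), f i) \<in> ?R" by (subst (asm) wf_iff_no_infinite_down_chain) (rule notnotD)
  then obtain f where f0: "\<forall>i. (f (Suc i), f i) \<in> ?R" ..
  from f0 have f: "(f (Suc i), f i) \<in> ?R" for i by (rule spec)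
  have "\<forall>i. \<exists>D. D \<noteq> {} \<and> finite D \<and> D \<inter> \<Union>(f i) = {} \<and> f (Suc i) = insert D (f i) \<and> (\<exists>t\<in>T. \<forall>F\<in>f (Suc i). Bset S \<pi> t \<inter> F \<noteq> {})"
  proof
    fix i
    obtain D \<A> where h: "(f (Suc i), f i) = (insert D \<A>, \<A>)" "D \<noteq> {}" "finite D" "D \<inter> \<Union>\<A> = {}"
      "\<exists>t\<in>T. \<forall>F\<in>insert D \<A>. Bset S \<pi> t \<inter> F \<noteq> {}"
      using f[of i] unfolding mem_Collect_eq by (elim exE conjE) (rule that)
    have e1: "f i = \<A>" "f (Suc i) = insert D \<A>" using h(1) by simp_all
    show "\<exists>D. D \<noteq> {} \<and> finite D \<and> D \<inter> \<Union>(f i) = {} \<and> f (Suc i) = insert D (f i) \<and> (\<exists>t\<in>T. \<forall>F\<in>f (Suc i). Bset S \<pi> t \<inter> F \<noteq> {})"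
      apply (rule exI[where x=D]) unfolding e1 using h(2-5) by (intro conjI) (assumption | rule refl)+
  qed
  then obtain Dd where Dd': "\<forall>i. Dd i \<noteq> {} \<and> finite (Dd i) \<and> Dd i \<inter> \<Union>(f i) = {} \<and> f (Suc i) = insert (Dd i) (f i) \<and> (\<exists>t\<in>T. \<forall>F\<in>f (Suc i). Bset S \<pi> t \<inter> F \<noteq> {})"
    by (rule choice[THEN exE])
  then have Dd: "\<And>i. Dd i \<noteq> {}" "\<And>i. finite (Dd i)" "\<And>i. Dd i \<inter> \<Union>(f i) = {}" "\<And>i. f (Suc i) = insert (Dd i) (f i)"
    by auto
  have "\<forall>i. \<exists>t. t \<in> T \<and> (\<forall>F\<in>f (Suc i). Bset S \<pi> t \<inter> F \<noteq> {})" using Dd' by blast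
  then obtain tt where tt': "\<forall>i. tt i \<in> T \<and> (\<forall>F\<in>f (Suc i). Bset S \<pi> (tt i) \<inter> F \<noteq> {})"
    by (rule choice[THEN exE])
  then have tt: "\<And>i. tt i \<in> T" "\<And>i F. F \<in> f (Suc i) \<Longrightarrow> Bset S \<pi> (tt i) \<inter> F \<noteq> {}" by auto
  have fmono: "f i \<subseteq> f j" if "i \<le> j" for i j
  proof -
    have "\<And>n. f n \<le> f (Suc n)" using Dd(4) by auto
    then show ?thesis using lift_Suc_mono_le[of f, OF _ that] by blast
  qed
  have Din: "Dd i \<in> f (Suc m)" if "i \<le> m" for i m
    using fmono[of "Suc i" "Suc m"] that Dd(4)[of i] by auto
  have Ddisj: "Dd i \<inter> Dd j = {}" if "i < j" for i j
  proof -
    have "Dd i \<in> f j" using Din[of i "j - 1"] that by (cases j) auto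
    then show ?thesis using Dd(3)[of j] by blast
  qed
  define \<Phi> where "\<Phi> A j \<longleftrightarrow> A \<subseteq> (\<Union>i<j. Dd i) \<and> infinite {m. j \<le> m \<and> A \<subseteq> Bset S \<pi> (tt m)}" for A j
  have notPhi: "\<forall>j. \<not> \<Phi> A j" for A :: "'a set"
  proof (rule wf_induct[OF wfQ[OF lng fin], where P = "\<lambda>A. \<forall>j. \<not> \<Phi> A j"])
    fix A :: "'a set"
    assume IH: "\<forall>y. (y, A) \<in> {(Y, X). X \<subset> Y \<and> (\<exists>t\<in>T. Y \<subseteq> Bset S \<pi> t)} \<longrightarrow> (\<forall>j. \<not> \<Phi> y j)"
    show "\<forall>j. \<not> \<Phi> A j"
    proof (intro allI notI)
      fix j assume Ph: "\<Phi> A j"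
      define M where "M = {m. j \<le> m \<and> A \<subseteq> Bset S \<pi> (tt m)}"
      have Minf: "infinite M" using Ph by (simp add: \<Phi>_def M_def)
      have Asub: "A \<subseteq> (\<Union>i<j. Dd i)" using Ph by (simp add: \<Phi>_def)
      have cover: "M \<subseteq> (\<Union>a\<in>Dd j. {m\<in>M. a \<in> Bset S \<pi> (tt m)})"
      proof
        fix m assume m: "m \<in> M"
        then have "Bset S \<pi> (tt m) \<inter> Dd j \<noteq> {}" using tt(2)[OF Din[of j m]] by (simp add: M_def)
        then show "m \<in> (\<Union>a\<in>Dd j. {m\<in>M. a \<in> Bset S \<pi> (tt m)})" using m by blast
      qed
      have "\<exists>a\<in>Dd j. infinite {m\<in>M. a \<in> Bset S \<pi> (tt m)}"
      proof (rule ccontr)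
        assume "\<not> ?thesis"
        then have "finite (\<Union>a\<in>Dd j. {m\<in>M. a \<in> Bset S \<pi> (tt m)})" using Dd(2)[of j] by auto
        then show False using Minf cover finite_subset by blast
      qed
      then obtain a where a: "a \<in> Dd j" "infinite {m\<in>M. a \<in> Bset S \<pi> (tt m)}" by blast
      have aA: "a \<notin> A"
      proof
        assume "a \<in> A"
        then obtain i where "i < j" "a \<in> Dd i" using Asub by blast
        then show False using Ddisj[of i j] a(1) by blast
      qed
      have sub: "{m\<in>M. a \<in> Bset S \<pi> (tt m)} - {j} \<subseteq> {m. Suc j \<le> m \<and> insert a A \<subseteq> Bset S \<pi> (tt m)}"
        by (auto simp: M_def)
      have inf2: "infinite {m. Suc j \<le> m \<and> insert a A \<subseteq> Bset S \<pi> (tt m)}"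
        using infinite_super[OF sub] a(2) by auto
      have Ph2: "\<Phi> (insert a A) (Suc j)"
        unfolding \<Phi>_def using inf2 Asub a(1) by (auto simp: lessThan_Suc)
      obtain m where "m \<in> {m. Suc j \<le> m \<and> insert a A \<subseteq> Bset S \<pi> (tt m)}"
        using inf2 not_finite_existsD by blast
      then have "(insert a A, A) \<in> {(Y, X). X \<subset> Y \<and> (\<exists>t\<in>T. Y \<subseteq> Bset S \<pi> t)}"
        using aA tt(1)[of m] by blast
      then show False using IH Ph2 by blast
    qed
  qed
  have "\<Phi> {} 0" unfolding \<Phi>_def by simp
  then show False using notPhi by blast
qed

definition good :: "'a set \<Rightarrow> 'b set \<Rightarrow> ('a \<Rightarrow> 'b \<Rightarrow> bool) \<Rightarrow> 'a set set \<Rightarrow> bool" where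
  "good S T \<pi> \<A> \<longleftrightarrow> (\<forall>\<epsilon>::real>0. \<forall>Z::'a set. finite Z \<longrightarrow> (\<exists>(p::'a \<Rightarrow> real) D. finite D \<and> D \<subseteq> S \<and> D \<inter> Z = {} \<and>
      (\<forall>x. 0 \<le> p x) \<and> (\<forall>x. x \<notin> D \<longrightarrow> p x = 0) \<and> sum p D = 1 \<and>
      (\<forall>t\<in>T. (\<forall>F\<in>\<A>. Bset S \<pi> t \<inter> F \<noteq> {}) \<longrightarrow> sum p (Bset S \<pi> t - \<Union>\<A>) \<le> \<epsilon>)))"

lemma avoid_point:
  assumes "infinite S" "finite Z" shows "\<exists>x\<in>S. x \<notin> Z"
  using assms by (metis finite_subset subsetI)

lemma good_trivial:
  assumes Sinf: "infinite S" and none: "\<not> (\<exists>t\<in>T. \<forall>F\<in>\<A>. Bset S \<pi> t \<inter> F \<noteq> {})"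
  shows "good S T \<pi> \<A>"
  unfolding good_def
proof (intro allI impI)
  fix \<epsilon> :: real and Z :: "'a set" assume "finite Z"
  then obtain x where x: "x \<in> S" "x \<notin> Z" using avoid_point[OF Sinf] by blast
  show "\<exists>p D. finite D \<and> D \<subseteq> S \<and> D \<inter> Z = {} \<and>
      (\<forall>x. 0 \<le> p x) \<and> (\<forall>x. x \<notin> D \<longrightarrow> p x = 0) \<and> sum p D = 1 \<and>
      (\<forall>t\<in>T. (\<forall>F\<in>\<A>. Bset S \<pi> t \<inter> F \<noteq> {}) \<longrightarrow> sum p (Bset S \<pi> t - \<Union>\<A>) \<le> \<epsilon>)"
    apply (rule exI[where x="\<lambda>y. if y = x then 1 else 0"], rule exI[where x="{x}"])
    using x none by auto
qed

lemma good_all: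
  assumes lng: "LNG_free S T \<pi>" and fin: "\<And>t. t \<in> T \<Longrightarrow> finite (Bset S \<pi> t)"
    and Sinf: "infinite S"
  shows "finite (\<Union>\<A>) \<longrightarrow> good S T \<pi> \<A>"
proof (rule wf_induct[OF wfR[OF lng fin], where P = "\<lambda>\<A>. finite (\<Union>\<A>) \<longrightarrow> good S T \<pi> \<A>"])
  fix \<A> :: "'a set set"
  assume IH: "\<forall>y. (y, \<A>) \<in> {(insert D \<A>, \<A>) | D \<A>. D \<noteq> {} \<and> finite D \<and> D \<inter> \<Union>\<A> = {} \<and> (\<exists>t\<in>T. \<forall>F\<in>insert D \<A>. Bset S \<pi> t \<inter> F \<noteq> {})}
     \<longrightarrow> finite (\<Union>y) \<longrightarrow> good S T \<pi> y"
  show "finite (\<Union>\<A>) \<longrightarrow> good S T \<pi> \<A>"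
  proof
    assume Ufin: "finite (\<Union>\<A>)"
    define U where "U = \<Union>\<A>"
    have IH2: "good S T \<pi> (insert D \<A>)" if D: "D \<noteq> {}" "finite D" "D \<inter> U = {}" for D
    proof (cases "\<exists>t\<in>T. \<forall>F\<in>insert D \<A>. Bset S \<pi> t \<inter> F \<noteq> {}")
      case True
      have "(insert D \<A>, \<A>) \<in> {(insert D \<A>, \<A>) | D \<A>. D \<noteq> {} \<and> finite D \<and> D \<inter> \<Union>\<A> = {} \<and> (\<exists>t\<in>T. \<forall>F\<in>insert D \<A>. Bset S \<pi> t \<inter> F \<noteq> {})}"
        unfolding mem_Collect_eq
        apply (rule exI[where x=D], rule exI[where x=\<A>])
        using D U_def True by simp
      moreover have "finite (\<Union>(insert D \<A>))" using Ufin D by simp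
      ultimately show ?thesis by (rule IH[rule_format])
    next
      case False then show ?thesis by (rule good_trivial[OF Sinf])
    qed
    show "good S T \<pi> \<A>"
      unfolding good_def
    proof (intro allI impI)
      fix \<epsilon> :: real and Z :: "'a set"
      assume \<epsilon>: "\<epsilon> > 0" and Zfin: "finite Z"
      define Z' where "Z' = Z \<union> U"
      have Z'fin: "finite Z'" using Zfin Ufin by (simp add: Z'_def U_def)
      define \<eta> where "\<eta> = \<epsilon> / 2"
      have \<eta>pos: "\<eta> > 0" using \<epsilon> by (simp add: \<eta>_def)
      have block: "\<exists>r D. finite D \<and> D \<subseteq> S \<and> D \<inter> Z' = {} \<and> D \<noteq> {} \<and> (\<forall>x. 0 \<le> r x) \<and> (\<forall>x. x \<notin> D \<longrightarrow> r x = 0)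
          \<and> sum r D = real (Suc k) \<and> (\<forall>t\<in>T. (\<forall>F\<in>\<A>. Bset S \<pi> t \<inter> F \<noteq> {}) \<longrightarrow> sum r (Bset S \<pi> t - U) \<le> 1 + real k * \<eta>)" for k
      proof (induction k)
        case 0
        obtain x where x: "x \<in> S" "x \<notin> Z'" using avoid_point[OF Sinf Z'fin] by blast
        have "sum (\<lambda>y. if y = x then 1 else 0) (Bset S \<pi> t - U) \<le> (1::real)" if "t \<in> T" for t
          using fin[OF that] by (simp add: sum.delta)
        then show ?case
          apply (intro exI[where x="\<lambda>y. if y = x then 1 else 0"] exI[where x="{x}"])
          using x by auto
      next
        case (Suc k)
        then obtain r D where rD: "finite D" "D \<subseteq> S" "D \<inter> Z' = {}" "D \<noteq> {}" "\<And>x. 0 \<le> r x" "\<And>x. x \<notin> D \<Longrightarrow> r x = 0"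
          "sum r D = real (Suc k)" "\<And>t. t\<in>T \<Longrightarrow> (\<forall>F\<in>\<A>. Bset S \<pi> t \<inter> F \<noteq> {}) \<Longrightarrow> sum r (Bset S \<pi> t - U) \<le> 1 + real k * \<eta>"
          by blast
        have DU: "D \<inter> U = {}" using rD(3) Z'_def by blast
        have g: "good S T \<pi> (insert D \<A>)" by (rule IH2[OF rD(4) rD(1) DU])
        have fZD: "finite (Z' \<union> D)" using Z'fin rD(1) by simp
        have ex: "\<exists>(p::'a \<Rightarrow> real) D'. finite D' \<and> D' \<subseteq> S \<and> D' \<inter> (Z' \<union> D) = {} \<and>
            (\<forall>x. 0 \<le> p x) \<and> (\<forall>x. x \<notin> D' \<longrightarrow> p x = 0) \<and> sum p D' = 1 \<and>
            (\<forall>t\<in>T. (\<forall>F\<in>insert D \<A>. Bset S \<pi> t \<inter> F \<noteq> {}) \<longrightarrow> sum p (Bset S \<pi> t - \<Union>(insert D \<A>)) \<le> \<eta>)"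
          using g[unfolded good_def, rule_format, OF \<eta>pos fZD] .
        then obtain p D' where pD: "finite D'" "D' \<subseteq> S" "D' \<inter> (Z' \<union> D) = {}" "\<And>x. 0 \<le> p x" "\<And>x. x \<notin> D' \<Longrightarrow> p x = 0"
          "sum p D' = 1" "\<And>t. t\<in>T \<Longrightarrow> (\<forall>F\<in>insert D \<A>. Bset S \<pi> t \<inter> F \<noteq> {}) \<Longrightarrow> sum p (Bset S \<pi> t - \<Union>(insert D \<A>)) \<le> \<eta>"
          by blast
        define r' where "r' x = r x + p x" for x
        have s1: "sum r (D \<union> D') = sum r D"
          by (rule sum.mono_neutral_right) (use rD pD in auto)
        have s2: "sum p (D \<union> D') = sum p D'"
          by (rule sum.mono_neutral_right) (use rD pD in auto)
        have tot: "sum r' (D \<union> D') = real (Suc (Suc k))"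
          unfolding r'_def sum.distrib s1 s2 rD(7) pD(6) by simp
        have bnd: "sum r' (Bset S \<pi> t - U) \<le> 1 + real (Suc k) * \<eta>"
          if t: "t \<in> T" "\<forall>F\<in>\<A>. Bset S \<pi> t \<inter> F \<noteq> {}" for t
        proof -
          let ?G = "Bset S \<pi> t - U"
          have Gfin: "finite ?G" using fin[OF t(1)] by simp
          have split: "sum r' ?G = sum r ?G + sum p ?G" unfolding r'_def by (rule sum.distrib)
          have p1: "sum p ?G \<le> 1"
          proof -
            have "sum p ?G \<le> sum p (?G \<union> D')" by (rule sum_mono2) (use Gfin pD in auto)
            also have "\<dots> = sum p D'" by (rule sum.mono_neutral_left[symmetric]) (use Gfin pD in auto)
            finally show ?thesis using pD(6) by simp
          qed
          show ?thesis
          proof (cases "Bset S \<pi> t \<inter> D = {}")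
            case True
            then have "sum r ?G = 0" using rD(6) by (intro sum.neutral) auto
            moreover have "0 \<le> real (Suc k) * \<eta>" using \<eta>pos by simp
            ultimately show ?thesis using split p1 by linarith
          next
            case False
            then have "\<forall>F\<in>insert D \<A>. Bset S \<pi> t \<inter> F \<noteq> {}" using t(2) by auto
            then have pe: "sum p (Bset S \<pi> t - \<Union>(insert D \<A>)) \<le> \<eta>" using pD(7) t(1) by blast
            have "sum p (Bset S \<pi> t - \<Union>(insert D \<A>)) = sum p ?G"
              by (rule sum.mono_neutral_left) (use Gfin pD U_def in auto)
            then show ?thesis using split pe rD(8)[OF t] by (simp add: algebra_simps)
          qed
        qed
        show ?case
          apply (rule exI[where x=r'], rule exI[where x="D \<union> D'"])
          using rD pD tot bnd by (auto simp: r'_def)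
      qed
      obtain n :: nat where n: "2 / \<epsilon> < real n" using reals_Archimedean2 by blast
      have npos: "n > 0" using n \<epsilon> by (cases n) (auto simp: field_simps)
      then obtain k where k: "n = Suc k" by (cases n) auto
      obtain r D where rD: "finite D" "D \<subseteq> S" "D \<inter> Z' = {}" "\<And>x. 0 \<le> r x" "\<And>x. x \<notin> D \<Longrightarrow> r x = 0"
          "sum r D = real (Suc k)" "\<And>t. t\<in>T \<Longrightarrow> (\<forall>F\<in>\<A>. Bset S \<pi> t \<inter> F \<noteq> {}) \<Longrightarrow> sum r (Bset S \<pi> t - U) \<le> 1 + real k * \<eta>"
        using block[of k] by blast
      define p where "p x = r x / real (Suc k)" for x
      have ps: "sum p A = sum r A / real (Suc k)" for A unfolding p_def by (simp add: sum_divide_distrib)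
      have inv: "1 / real (Suc k) < \<eta>"
        using n k \<epsilon> by (simp add: \<eta>_def field_simps)
      have bound: "sum p (Bset S \<pi> t - \<Union>\<A>) \<le> \<epsilon>" if "t\<in>T" "\<forall>F\<in>\<A>. Bset S \<pi> t \<inter> F \<noteq> {}" for t
      proof -
        have "sum p (Bset S \<pi> t - \<Union>\<A>) \<le> (1 + real k * \<eta>) / real (Suc k)"
          unfolding ps U_def[symmetric] by (rule divide_right_mono[OF rD(7)[OF that]]) simp
        also have "\<dots> = 1 / real (Suc k) + (real k / real (Suc k)) * \<eta>" by (simp add: field_simps)
        also have "\<dots> \<le> 1 / real (Suc k) + 1 * \<eta>"
          by (intro add_left_mono mult_right_mono) (use \<eta>pos in auto)
        also have "\<dots> \<le> \<epsilon>" using inv by (simp add: \<eta>_def)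
        finally show ?thesis .
      qed
      show "\<exists>p D. finite D \<and> D \<subseteq> S \<and> D \<inter> Z = {} \<and>
          (\<forall>x. 0 \<le> p x) \<and> (\<forall>x. x \<notin> D \<longrightarrow> p x = 0) \<and> sum p D = 1 \<and>
          (\<forall>t\<in>T. (\<forall>F\<in>\<A>. Bset S \<pi> t \<inter> F \<noteq> {}) \<longrightarrow> sum p (Bset S \<pi> t - \<Union>\<A>) \<le> \<epsilon>)"
        apply (rule exI[where x=p], rule exI[where x=D])
        using rD bound ps[of D] by (auto simp: Z'_def p_def)
    qed
  qed
qed

theorem corollary2p12:
  fixes S :: "'a set" and T :: "'b set" and \<pi> :: "'a \<Rightarrow> 'b \<Rightarrow> bool"
  assumes "countable_game S T"
    and "\<forall>B\<in>B2 S T \<pi>. finite B"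
    and "LNG_free S T \<pi>"
  shows "(\<forall>p\<in>distr S. \<exists>q0\<in>distr T.
            pimix S T \<pi> p q0 = (INF q\<in>distr T. pimix S T \<pi> p q))
       \<and> (SUP p\<in>distr S. INF q\<in>distr T. pimix S T \<pi> p q) = 1
       \<and> (\<exists>q0\<in>distr T. (SUP p\<in>distr S. pimix S T \<pi> p q0)
                         = (INF q\<in>distr T. SUP p\<in>distr S. pimix S T \<pi> p q))
       \<and> (INF q\<in>distr T. SUP p\<in>distr S. pimix S T \<pi> p q) = 1"
proof -
  have Sinf: "infinite S" and Tinf: "infinite T" using assms(1) unfolding countable_game_def by auto
  have fin: "\<And>t. t \<in> T \<Longrightarrow> finite (Bset S \<pi> t)" using assms(2) unfolding B2_def by auto
  have lng: "LNG_free S T \<pi>" by (rule assms(3))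
  obtain t00 where t00: "t00 \<in> T" using Tinf by (metis finite.emptyI ex_in_conv)
  obtain s00 where s00: "s00 \<in> S" using Sinf by (metis finite.emptyI ex_in_conv)
  let ?pm = "pimix S T \<pi>"
  define \<delta>T where "\<delta>T t = (\<lambda>y. if y = t then 1 else 0::real)" for t :: 'b
  define \<delta>S where "\<delta>S s = (\<lambda>y. if y = s then 1 else 0::real)" for s :: 'a
  have \<delta>T: "\<delta>T t \<in> distr T" if "t \<in> T" for t unfolding \<delta>T_def by (rule delta_distr[OF that])
  have \<delta>S: "\<delta>S s \<in> distr S" if "s \<in> S" for s unfolding \<delta>S_def by (rule delta_distr[OF that])
  have DTne: "distr T \<noteq> {}" using \<delta>T[OF t00] by blast
  have DSne: "distr S \<noteq> {}" using \<delta>S[OF s00] by blast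
  have BS: "Bset S \<pi> t \<subseteq> S" for t by (auto simp: Bset_def)
  have vbd: "0 \<le> sum p (Bset S \<pi> t) \<and> sum p (Bset S \<pi> t) \<le> 1" if "p \<in> distr S" "t \<in> T" for p t
    using distr_sum_le1[OF that(1) fin[OF that(2)] BS] distr_D(1)[OF that(1)] by (simp add: sum_nonneg)
  have form: "((\<lambda>t. q t * (1 - sum p (Bset S \<pi> t))) has_sum ?pm p q) T"
    if "p \<in> distr S" "q \<in> distr T" for p q by (rule pimix_formula[OF that fin])
  have lower: "?pm p q \<ge> 1 - c" if pq: "p \<in> distr S" "q \<in> distr T" and c: "\<And>t. t \<in> T \<Longrightarrow> sum p (Bset S \<pi> t) \<le> c" for p q c
  proof -
    have "((\<lambda>t. q t * (1 - c)) has_sum (1 * (1 - c))) T"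
      by (rule has_sum_cmult_left[OF distr_D(3)[OF pq(2)]])
    then show ?thesis
      using form[OF pq] distr_D(1)[OF pq(2)] c
      by (simp add: has_sum_mono mult_left_mono)
  qed
  have upper: "?pm p q \<le> 1" and nonneg: "0 \<le> ?pm p q" if pq: "p \<in> distr S" "q \<in> distr T" for p q
  proof -
    have h: "((\<lambda>t. q t * 1) has_sum 1) T" using distr_D(3)[OF pq(2)] by simp
    show "?pm p q \<le> 1"
    proof (rule has_sum_mono[OF form[OF pq] h])
      fix t assume t: "t \<in> T"
      show "q t * (1 - sum p (Bset S \<pi> t)) \<le> q t * 1"
        using vbd[OF pq(1) t] distr_D(1)[OF pq(2)] by (intro mult_left_mono) auto
    qed
    show "0 \<le> ?pm p q"
      using form[OF pq] distr_D(1)[OF pq(2)] vbd[OF pq(1)]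
      by (intro has_sum_nonneg[OF form[OF pq]]) auto
  qed
  have bddb: "bdd_below ((\<lambda>q. ?pm p q) ` distr T)" if "p \<in> distr S" for p
    using nonneg[OF that] by (intro bdd_belowI[of _ 0]) auto
  have part1: "\<exists>q0\<in>distr T. ?pm p q0 = (INF q\<in>distr T. ?pm p q)" if p: "p \<in> distr S" for p
  proof -
    obtain t0 where t0: "t0 \<in> T" "\<And>t. t\<in>T \<Longrightarrow> sum p (Bset S \<pi> t) \<le> sum p (Bset S \<pi> t0)"
      using max_attained[OF lng fin p] Tinf by force
    have "((\<lambda>t. \<delta>T t0 t * (1 - sum p (Bset S \<pi> t))) has_sum (1 - sum p (Bset S \<pi> t0))) T"
      by (rule has_sum_finite_neutralI[of "{t0}"]) (use t0 in \<open>auto simp: \<delta>T_def\<close>)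
    then have v0: "?pm p (\<delta>T t0) = 1 - sum p (Bset S \<pi> t0)"
      using form[OF p \<delta>T[OF t0(1)]] has_sum_unique by blast
    have "(INF q\<in>distr T. ?pm p q) = ?pm p (\<delta>T t0)"
    proof (rule cInf_eq_minimum)
      show "?pm p (\<delta>T t0) \<in> (\<lambda>q. ?pm p q) ` distr T" using \<delta>T[OF t0(1)] by blast
      fix y assume "y \<in> (\<lambda>q. ?pm p q) ` distr T"
      then obtain q where q: "q \<in> distr T" "y = ?pm p q" by blast
      show "?pm p (\<delta>T t0) \<le> y" using lower[OF p q(1) t0(2)] q(2) v0 by simp
    qed
    then show ?thesis using \<delta>T[OF t0(1)] by auto
  qed
  have INFle1: "(INF q\<in>distr T. ?pm p q) \<le> 1" if p: "p \<in> distr S" for p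
    using cINF_lower[OF bddb[OF p] \<delta>T[OF t00]] upper[OF p \<delta>T[OF t00]] by linarith
  have goodp: "\<exists>p\<in>distr S. (INF q\<in>distr T. ?pm p q) \<ge> 1 - \<epsilon>" if \<epsilon>: "\<epsilon> > 0" for \<epsilon>
  proof -
    have g: "good S T \<pi> {}" using good_all[OF lng fin Sinf, of "{}"] by simp
    obtain p D where pD: "finite D" "D \<subseteq> S" "\<forall>x. 0 \<le> p x" "\<forall>x. x \<notin> D \<longrightarrow> p x = 0" "sum p D = 1"
      "\<forall>t\<in>T. sum p (Bset S \<pi> t) \<le> \<epsilon>"
      using g[unfolded good_def, rule_format, OF \<epsilon> finite.emptyI] by auto
    have "countable {x. p x \<noteq> 0}"
      using pD(1,4) by (intro countable_finite) (metis (mono_tags) finite_subset mem_Collect_eq subsetI)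
    moreover have "(p has_sum 1) S"
      by (rule has_sum_finite_neutralI[of D]) (use pD in auto)
    ultimately have pdist: "p \<in> distr S" using pD unfolding distr_def by auto
    have "(INF q\<in>distr T. ?pm p q) \<ge> 1 - \<epsilon>"
      by (rule cINF_greatest[OF DTne]) (use lower[OF pdist] pD(6) in auto)
    then show ?thesis using pdist by blast
  qed
  have bdda: "bdd_above ((\<lambda>p. INF q\<in>distr T. ?pm p q) ` distr S)"
    using INFle1 by (intro bdd_aboveI[of _ 1]) auto
  have part2: "(SUP p\<in>distr S. INF q\<in>distr T. ?pm p q) = 1"
  proof (rule antisym)
    show "(SUP p\<in>distr S. INF q\<in>distr T. ?pm p q) \<le> 1"
      by (rule cSUP_least[OF DSne INFle1])
    show "1 \<le> (SUP p\<in>distr S. INF q\<in>distr T. ?pm p q)"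
    proof (rule field_le_epsilon)
      fix e :: real assume e: "0 < e"
      obtain p where p: "p \<in> distr S" "(INF q\<in>distr T. ?pm p q) \<ge> 1 - e" using goodp[OF e] by blast
      have "(INF q\<in>distr T. ?pm p q) \<le> (SUP p\<in>distr S. INF q\<in>distr T. ?pm p q)"
        by (rule cSUP_upper[OF p(1) bdda])
      then show "1 \<le> (SUP p\<in>distr S. INF q\<in>distr T. ?pm p q) + e" using p(2) by linarith
    qed
  qed
  have SUP1: "(SUP p\<in>distr S. ?pm p q) = 1" if q: "q \<in> distr T" for q
  proof (rule antisym)
    show "(SUP p\<in>distr S. ?pm p q) \<le> 1" by (rule cSUP_least[OF DSne]) (use upper q in auto)
    have bdd: "bdd_above ((\<lambda>p. ?pm p q) ` distr S)" using upper q by (intro bdd_aboveI[of _ 1]) auto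
    show "1 \<le> (SUP p\<in>distr S. ?pm p q)"
    proof (rule field_le_epsilon)
      fix e :: real assume e: "0 < e"
      obtain W where W: "finite W" "W \<subseteq> T" "dist (sum q W) 1 \<le> e"
        using has_sum_finite_approximation[OF distr_D(3)[OF q] e] by auto
      have qW: "sum q W \<ge> 1 - e" using W(3) by (simp add: dist_real_def abs_le_iff)
      have "finite (\<Union>t\<in>W. Bset S \<pi> t)" using W fin by auto
      then obtain s where s: "s \<in> S" "s \<notin> (\<Union>t\<in>W. Bset S \<pi> t)" using avoid_point[OF Sinf] by blast
      have h1: "((\<lambda>t. if t \<in> W then q t else 0) has_sum sum q W) T"
        by (rule has_sum_finite_neutralI[of W]) (use W in auto)
      have "sum q W \<le> ?pm (\<delta>S s) q"
      proof (rule has_sum_mono[OF h1 form[OF \<delta>S[OF s(1)] q]])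
        fix t assume t: "t \<in> T"
        have "sum (\<delta>S s) (Bset S \<pi> t) = (if s \<in> Bset S \<pi> t then 1 else 0)"
          using fin[OF t] by (simp add: \<delta>S_def sum.delta)
        then show "(if t \<in> W then q t else 0) \<le> q t * (1 - sum (\<delta>S s) (Bset S \<pi> t))"
          using s(2) distr_D(1)[OF q, of t] by auto
      qed
      moreover have "?pm (\<delta>S s) q \<le> (SUP p\<in>distr S. ?pm p q)" by (rule cSUP_upper[OF \<delta>S[OF s(1)] bdd])
      ultimately show "1 \<le> (SUP p\<in>distr S. ?pm p q) + e" using qW by linarith
    qed
  qed
  have part4: "(INF q\<in>distr T. SUP p\<in>distr S. ?pm p q) = 1"
  proof -
    have "(INF q\<in>distr T. SUP p\<in>distr S. ?pm p q) = (INF q\<in>distr T. (1::real))"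
      by (rule INF_cong) (auto simp: SUP1)
    also have "\<dots> = 1" using DTne by simp
    finally show ?thesis .
  qed
  have part3: "\<exists>q0\<in>distr T. (SUP p\<in>distr S. ?pm p q0) = (INF q\<in>distr T. SUP p\<in>distr S. ?pm p q)"
    using \<delta>T[OF t00] SUP1[OF \<delta>T[OF t00]] part4 by auto
  show ?thesis using part1 part2 part3 part4 by blast
qed

end
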